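(* Let $p,q\in\mathbb N$, let $d=\gcd(p,q)$, and write $p=p'\cdot d$, $q=q'\cdot d$. Suppose $p\ge q'>1$ and $q\ge p'>1$. Then the number $m=p'\cdot q'\cdot d=p\cdot q'=q\cdot p'$ is antipalindromic both in base $p+1$ and in base $q+1$.
   Context: For an integer $b\ge 2$, every natural number $x$ has a unique base-$b$ expansion $x=a_\ell b^\ell+\dots+a_1b+a_0$ with $a_0,\dots,a_\ell\in\{0,1,\dots,b-1\}$ and $a_\ell\neq 0$. The number $x$ is antipalindromic in base $b$ if $a_j=b-1-a_{\ell-j}$ for all $j\in\{0,1,\dots,\ell\}$. *)

theory Defs
  imports Main
begin

definition digit :: "nat \<Rightarrow> nat \<Rightarrow> nat \<Rightarrow> nat" where
  "digit b x j = (x div b ^ j) mod b"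

definition top_index :: "nat \<Rightarrow> nat \<Rightarrow> nat" where
  "top_index b x = (THE l. b ^ l \<le> x \<and> x < b ^ (Suc l))"

text \<open>x is antipalindromic in base b: x has a base-b expansion a_l ... a_0 with
  a_l nonzero (so x \<ge> 1), and a_j = b - 1 - a_(l-j) for all j \<le> l.\<close>
definition antipalindromic :: "nat \<Rightarrow> nat \<Rightarrow> bool" where
  "antipalindromic b x \<longleftrightarrow> x \<ge> 1 \<and>
     (\<forall>j \<le> top_index b x. digit b x j = b - 1 - digit b x (top_index b x - j))"

end

theory Submission
  imports Defs
begin

lemma anti_aux:
  fixes p k :: nat
  assumes "1 < k" "k \<le> p"
  shows "antipalindromic (p + 1) (p * k)"
proof -
  define b where "b = p + 1"
  have xe: "p * k = (k - 1) * b + (b - k)"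
    using assms unfolding b_def by (cases k) (auto simp: algebra_simps)
  have lt: "b - k < b" using assms unfolding b_def by auto
  have bp: "0 < b" unfolding b_def by simp
  have m0: "p * k mod b = b - k"
  proof -
    have "p * k mod b = ((b - k) + (k - 1) * b) mod b" using xe by (simp add: add.commute)
    also have "... = (b - k) mod b" by (rule mod_mult_self1)
    also have "... = b - k" using lt by simp
    finally show ?thesis .
  qed
  have d0: "p * k div b = k - 1"
  proof -
    have "p * k div b = ((b - k) + (k - 1) * b) div b" using xe by (simp add: add.commute)
    also have "... = (b - k) div b + (k - 1)" using bp by simp
    also have "... = k - 1" using lt by simp
    finally show ?thesis .
  qed
  have ge: "b \<le> p * k"
  proof -
    have "p * 2 \<le> p * k" using assms by simp
    thus ?thesis using assms unfolding b_def by linarith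
  qed
  have lt2: "p * k < b ^ 2"
  proof -
    have "p * k \<le> p * p" using assms by simp
    also have "... < b * b" unfolding b_def by (simp add: mult_strict_mono)
    finally show ?thesis by (simp add: power2_eq_square)
  qed
  have ti: "top_index b (p * k) = 1"
    unfolding top_index_def
  proof (rule the_equality)
    show "b ^ 1 \<le> p * k \<and> p * k < b ^ Suc 1" using ge lt2 by (simp add: power2_eq_square)
  next
    fix l assume h: "b ^ l \<le> p * k \<and> p * k < b ^ Suc l"
    show "l = 1"
    proof (rule ccontr)
      assume "l \<noteq> 1"
      then consider "l = 0" | "l \<ge> 2" by linarith
      thus False
      proof cases
        case 1 thus False using h ge by simp
      next
        case 2
        have "b ^ 2 \<le> b ^ l" using 2 unfolding b_def by (intro power_increasing) auto
        thus False using h lt2 by linarith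
      qed
    qed
  qed
  have dg0: "digit b (p * k) 0 = b - k" using m0 by (simp add: digit_def)
  have dg1: "digit b (p * k) 1 = k - 1" using d0 assms unfolding digit_def b_def by simp
  have "\<forall>j \<le> 1. digit b (p * k) j = b - 1 - digit b (p * k) (1 - j)"
  proof (intro allI impI)
    fix j :: nat assume "j \<le> 1"
    then consider "j = 0" | "j = 1" by linarith
    thus "digit b (p * k) j = b - 1 - digit b (p * k) (1 - j)"
      by cases (use dg0 dg1 assms in \<open>auto simp: b_def\<close>)
  qed
  moreover have "p * k \<ge> 1" using assms by simp
  ultimately have "antipalindromic b (p * k)" unfolding antipalindromic_def ti by blast
  thus ?thesis unfolding b_def .
qed

theorem mainTheorem16:
  fixes p q :: nat
  defines "d \<equiv> gcd p q"
  defines "p' \<equiv> p div d"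
  defines "q' \<equiv> q div d"
  assumes "p \<ge> q'" and "q' > 1" and "q \<ge> p'" and "p' > 1"
  shows "p' * q' * d = p * q' \<and> p * q' = q * p' \<and>
         antipalindromic (p + 1) (p' * q' * d) \<and> antipalindromic (q + 1) (p' * q' * d)"
proof -
  have pe: "p = p' * d" unfolding p'_def d_def by simp
  have qe: "q = q' * d" unfolding q'_def d_def by simp
  have e1: "p' * q' * d = p * q'" using pe by simp
  have e2: "p * q' = q * p'" using pe qe by simp
  have a1: "antipalindromic (p + 1) (p * q')" using anti_aux[of q' p] assms by simp
  have a2: "antipalindromic (q + 1) (q * p')" using anti_aux[of p' q] assms by simp
  have e3: "p' * q' * d = q * p'" using e1 e2 by simp
  have a3: "antipalindromic (q + 1) (p' * q' * d)" using a2 unfolding e3 .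
  have a4: "antipalindromic (p + 1) (p' * q' * d)" using a1 unfolding e1 .
  show ?thesis using e1 e2 a3 a4 by blast
qed

end
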